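(* Let $\lambda_j,\mu_j$ be real numbers with $0\le\lambda_j\le\mu_j$ for $j=0,\dots,n$. Then $\Phi_{(\lambda_0,\dots,\lambda_n)}(x)$ is real for all $x\in\mathbb{R}$, $\Phi_{(\lambda_0,\dots,\lambda_n)}(x)>0$ for all $x>0$, and $$\left|\Phi_{(\lambda_0,\dots,\lambda_n)}(z)\right|\le\Phi_{(\mu_0,\dots,\mu_n)}(|z|)\quad\text{for all }z\in\mathbb{C}.$$
   Context: For $\lambda_0,\dots,\lambda_n\in\mathbb{C}$ the fundamental function is the entire function $\Phi_{(\lambda_0,\dots,\lambda_n)}(z)=\frac{1}{2\pi i}\int_{|w|=R}\frac{e^{zw}}{(w-\lambda_0)\cdots(w-\lambda_n)}\,dw$, where $R>\max_j|\lambda_j|$ and the circle is positively oriented. *)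

theory Defs
  imports "HOL-Analysis.Analysis"
begin

text \<open>Contour integral over the positively oriented circle |w| = R, parametrised by
  t in [0,1] as R * exp(2 pi i t), written out literally (as in the definition of
  contour_integral in HOL-Complex_Analysis, which is not importable here).\<close>

definition circlepath_R :: "real \<Rightarrow> real \<Rightarrow> complex" where
  "circlepath_R R t = complex_of_real R * exp (2 * complex_of_real pi * \<i> * complex_of_real t)"

definition fundamental_fun :: "nat \<Rightarrow> (nat \<Rightarrow> complex) \<Rightarrow> complex \<Rightarrow> complex" where
  "fundamental_fun n lam z =
     (let R = Max ((\<lambda>j. cmod (lam j)) ` {0..n}) + 1;
          \<gamma> = circlepath_R R
      in integral {0..1}
           (\<lambda>t. exp (z * \<gamma> t) / (\<Prod>j=0..n. \<gamma> t - lam j)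
                 * vector_derivative \<gamma> (at t within {0..1}))
         / (2 * complex_of_real pi * \<i>))"

end

theory Submission
  imports Defs
begin

lemma integral_series:
  fixes f :: "nat \<Rightarrow> real \<Rightarrow> complex"
  assumes cont: "\<And>i. continuous_on {0..1} (f i)"
    and bound: "\<And>i t. t \<in> {0..1} \<Longrightarrow> norm (f i t) \<le> M i" and sm: "summable M"
  shows "(\<lambda>i. integral {0..1} (f i)) sums integral {0..1} (\<lambda>t. \<Sum>i. f i t)"
proof -
  have u: "uniform_limit {0..1} (\<lambda>n t. \<Sum>i<n. f i t) (\<lambda>t. \<Sum>i. f i t) sequentially"
    by (rule Weierstrass_m_test[OF bound sm])
  have c: "\<And>n. continuous_on {0..1::real} (\<lambda>t. \<Sum>i<n. f i t)"
    by (intro continuous_intros cont)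
  obtain I J where I: "\<And>n. ((\<lambda>t. \<Sum>i<n. f i t) has_integral I n) {0..1::real}"
    and J: "((\<lambda>t. \<Sum>i. f i t) has_integral J) {0..1}" and lim: "I \<longlonglongrightarrow> J"
    using uniform_limit_integral[OF u c] by auto
  have "I = (\<lambda>n. \<Sum>i<n. integral {0..1} (f i))"
  proof (rule ext)
    fix n
    have "((\<lambda>t. \<Sum>i<n. f i t) has_integral (\<Sum>i<n. integral {0..1} (f i))) {0..1}"
      by (intro has_integral_sum) (auto intro: integrable_continuous_real cont)
    then show "I n = (\<Sum>i<n. integral {0..1} (f i))" using I[of n] has_integral_unique by blast
  qed
  moreover have "J = integral {0..1} (\<lambda>t. \<Sum>i. f i t)" using J by (simp add: integral_unique)
  ultimately show ?thesis using lim unfolding sums_def by metis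
qed

lemma integral_exp_int:
  fixes k :: int
  shows "integral {0..1} (\<lambda>t::real. exp (2 * of_real pi * \<i> * of_int k * of_real t)) = (if k = 0 then 1 else 0)"
proof (cases "k = 0")
  case True then show ?thesis by simp
next
  case False
  define a where "a = 2 * of_real pi * \<i> * (of_int k :: complex)"
  have a0: "a \<noteq> 0" using False by (simp add: a_def)
  have d: "((\<lambda>t. exp (a * of_real t) / a) has_vector_derivative exp (a * of_real t)) (at t within {0..1})" for t
  proof -
    have "((\<lambda>w. exp (a * w) / a) has_field_derivative exp (a * of_real t)) (at (of_real t))"
      using a0 by (auto intro!: derivative_eq_intros)
    then show ?thesis by (rule has_vector_derivative_real_field)
  qed
  have "((\<lambda>t. exp (a * of_real t)) has_integral (exp (a * of_real 1) / a - exp (a * of_real 0) / a)) {0..1::real}"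
    by (rule fundamental_theorem_of_calculus) (auto intro: d)
  moreover have "exp (a * of_real 1) = 1"
    using exp_integer_2pi[of "of_int k"] by (simp add: a_def mult_ac)
  ultimately have "((\<lambda>t. exp (a * of_real t)) has_integral 0) {0..1::real}" by simp
  then show ?thesis using False by (simp add: a_def integral_unique mult_ac)
qed

lemma norm_circ: "R \<ge> 0 \<Longrightarrow> norm (circlepath_R R t) = R"
  by (simp add: circlepath_R_def norm_mult norm_exp_eq_Re)

lemma cont_circ: "continuous_on S (circlepath_R R)"
  unfolding circlepath_R_def by (intro continuous_intros)

lemma circ_pow: "circlepath_R R t ^ p = of_real (R ^ p) * exp (2 * of_real pi * \<i> * of_int (int p) * of_real t)"
  by (simp add: circlepath_R_def power_mult_distrib exp_of_nat_mult[symmetric] mult_ac)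

lemma circ_inv_pow: "R > 0 \<Longrightarrow> (1 / circlepath_R R t) ^ p = of_real ((1/R) ^ p) * exp (2 * of_real pi * \<i> * of_int (- int p) * of_real t)"
  by (simp add: circlepath_R_def power_mult_distrib exp_of_nat_mult[symmetric] mult_ac exp_minus power_divide divide_simps)

definition PP :: "(nat \<Rightarrow> complex) \<Rightarrow> real \<Rightarrow> nat \<Rightarrow> real \<Rightarrow> complex" where
  "PP c R m t = (\<Prod>j<m. circlepath_R R t - c j)"

lemma PP_ge:
  assumes "\<forall>j<m. cmod (c j) + 1 \<le> R"
  shows "norm (PP c R m t) \<ge> 1"
proof -
  have "1 \<le> norm (circlepath_R R t - c j)" if "j < m" for j
  proof -
    have R: "R \<ge> 0" using assms that by (smt (verit) norm_ge_zero)
    have "norm (circlepath_R R t) - norm (c j) \<le> norm (circlepath_R R t - c j)" by (rule norm_triangle_ineq2)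
    then show ?thesis using assms that norm_circ[OF R, of t] by auto
  qed
  then show ?thesis unfolding PP_def prod_norm[symmetric] by (intro prod_ge_1) auto
qed

lemma PP_nz: "\<forall>j<m. cmod (c j) + 1 \<le> R \<Longrightarrow> PP c R m t \<noteq> 0"
  using PP_ge[of m c R t] by auto

lemma cont_PP: "continuous_on S (PP c R m)"
  unfolding PP_def by (intro continuous_intros cont_circ)

lemma J_lem:
  assumes R1: "R \<ge> 1" and cR: "\<forall>j<m. cmod (c j) + 1 \<le> R"
  shows "integral {0..1} (\<lambda>t. (1 / circlepath_R R t)^q / PP c R m t) = (if q = 0 \<and> m = 0 then 1 else 0)"
  using cR
proof (induction m arbitrary: q)
  case 0
  have "integral {0..1} (\<lambda>t. (1 / circlepath_R R t)^q / PP c R 0 t)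
     = integral {0..1} (\<lambda>t. of_real ((1/R) ^ q) * exp (2 * of_real pi * \<i> * of_int (- int q) * of_real t))"
    using R1 by (simp add: PP_def circ_inv_pow)
  also have "\<dots> = of_real ((1/R) ^ q) * integral {0..1} (\<lambda>t. exp (2 * of_real pi * \<i> * of_int (- int q) * of_real t))"
    by (rule integral_mult_right)
  also have "\<dots> = (if q = 0 \<and> 0 = (0::nat) then 1 else 0)"
    by (simp only: integral_exp_int) simp
  finally show ?case .
next
  case (Suc m)
  define g where "g = circlepath_R R"
  define a where "a = c m"
  have cR: "\<forall>j<m. cmod (c j) + 1 \<le> R" using Suc.prems by auto
  have aR: "cmod a + 1 \<le> R" using Suc.prems by (auto simp: a_def)
  have R0: "R > 0" using R1 by simp
  have ng: "norm (g t) = R" for t using R0 by (simp add: g_def norm_circ)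
  have g0: "g t \<noteq> 0" for t using ng[of t] R0 by auto
  define f where "f i t = a^i * ((1 / g t)^(q+i+1) / PP c R m t)" for i t
  have pw: "(\<lambda>i. f i t) sums ((1 / g t)^q / PP c R (Suc m) t)" for t
  proof -
    have n1: "norm (a / g t) < 1" using aR R0 by (simp add: norm_divide ng)
    have X: "(\<lambda>i. (a / g t)^i * ((1/g t)^(q+1) / PP c R m t)) sums
          (1 / (1 - a / g t) * ((1/g t)^(q+1) / PP c R m t))"
      by (intro sums_mult2 geometric_sums n1)
    have E1: "(\<lambda>i. (a / g t)^i * ((1/g t)^(q+1) / PP c R m t)) = (\<lambda>i. f i t)"
      by (auto simp: f_def power_divide power_add field_simps)
    have E2: "1 / (1 - a / g t) * ((1/g t)^(q+1) / PP c R m t) = (1 / g t)^q / PP c R (Suc m) t"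
    proof -
      have "g t - a \<noteq> 0"
      proof
        assume "g t - a = 0"
        then have "norm (g t) = norm a" by simp
        then show False using ng[of t] aR by simp
      qed
      moreover have "PP c R m t \<noteq> 0" using PP_nz[OF cR] .
      ultimately show ?thesis using g0[of t]
        by (simp add: PP_def a_def g_def field_simps power_add)
    qed
    show ?thesis using X unfolding E1 E2 .
  qed
  have cont: "continuous_on {0..1} (f i)" for i
    unfolding f_def using g0 PP_nz[OF cR]
    by (intro continuous_intros cont_PP) (auto simp: g_def intro: cont_circ)
  have bnd: "norm (f i t) \<le> (cmod a / R)^i" if "t \<in> {0..1}" for i t
  proof -
    have "norm (f i t) = cmod a ^ i * ((1/R)^(q+i+1) / norm (PP c R m t))"
      by (simp add: f_def norm_mult norm_divide norm_power ng)
    also have "\<dots> \<le> cmod a ^ i * (1/R)^(q+i+1)"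
    proof (rule mult_left_mono)
      have "1 \<le> norm (PP c R m t)" using PP_ge[OF cR, of t] .
      moreover have "0 \<le> (1/R)^(q+i+1)" using R0 by simp
      ultimately show "(1/R)^(q+i+1) / norm (PP c R m t) \<le> (1/R)^(q+i+1)"
        using divide_left_mono[of 1 "norm (PP c R m t)" "(1/R)^(q+i+1)"] using PP_nz[OF cR, of t] by simp
    qed simp
    also have "\<dots> = (cmod a / R)^i * (1/R)^(q+1)" by (simp add: power_add power_divide)
    also have "\<dots> \<le> (cmod a / R)^i * 1"
      using R1 by (intro mult_left_mono power_le_one) auto
    finally show ?thesis by simp
  qed
  have sm: "summable (\<lambda>i. (cmod a / R)^i)"
    using aR R0 by (intro summable_geometric) simp
  have "(\<lambda>i. integral {0..1} (f i)) sums integral {0..1} (\<lambda>t. \<Sum>i. f i t)"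
    by (rule integral_series[OF cont bnd sm])
  moreover have "(\<lambda>t. \<Sum>i. f i t) = (\<lambda>t. (1 / g t)^q / PP c R (Suc m) t)"
    using pw by (auto simp: sums_iff)
  moreover have "integral {0..1} (f i) = 0" for i
  proof -
    have E: "integral {0..1} (f i) = a^i * integral {0..1} (\<lambda>t. (1 / g t)^(q+i+1) / PP c R m t)"
      unfolding f_def by (rule integral_mult_right)
    have Z: "integral {0..1} (\<lambda>t. (1 / g t)^(q+i+1) / PP c R m t) = 0"
      unfolding g_def by (subst Suc.IH[OF cR]) simp
    show ?thesis unfolding E Z by simp
  qed
  ultimately show ?case by (simp add: g_def sums_iff)
qed

fun Hs :: "(nat \<Rightarrow> 'a::comm_semiring_1) \<Rightarrow> nat \<Rightarrow> nat \<Rightarrow> 'a" where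
  "Hs c p 0 = (if p = 0 then 1 else 0)"
| "Hs c 0 (Suc m) = 0"
| "Hs c (Suc p) (Suc m) = Hs c p m + c m * Hs c p (Suc m)"

lemma K_lem:
  assumes R1: "R \<ge> 1"
  shows "\<forall>j<m. cmod (c j) + 1 \<le> R \<Longrightarrow> integral {0..1} (\<lambda>t. circlepath_R R t ^ p / PP c R m t) = Hs c p m"
proof (induction c p m rule: Hs.induct)
  case (1 c p)
  have "integral {0..1} (\<lambda>t. circlepath_R R t ^ p / PP c R 0 t)
     = integral {0..1} (\<lambda>t. of_real (R ^ p) * exp (2 * of_real pi * \<i> * of_int (int p) * of_real t))"
    by (simp add: PP_def circ_pow)
  also have "\<dots> = of_real (R ^ p) * integral {0..1} (\<lambda>t. exp (2 * of_real pi * \<i> * of_int (int p) * of_real t))"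
    by (rule integral_mult_right)
  also have "\<dots> = Hs c p 0"
    by (simp only: integral_exp_int) simp
  finally show ?case .
next
  case (2 c m)
  then show ?case using J_lem[OF R1 2, of 0] by simp
next
  case (3 c p m)
  have cR: "\<forall>j<m. cmod (c j) + 1 \<le> R" using 3 by auto
  have R0: "R > 0" using R1 by simp
  have ng: "norm (circlepath_R R t) = R" for t using R0 by (simp add: norm_circ)
  have nz: "circlepath_R R t - c m \<noteq> 0" for t
  proof
    assume "circlepath_R R t - c m = 0"
    then have "norm (circlepath_R R t) = norm (c m)" by simp
    then show False using ng[of t] 3(3) by auto
  qed
  have eq: "circlepath_R R t ^ Suc p / PP c R (Suc m) t
      = circlepath_R R t ^ p / PP c R m t + c m * (circlepath_R R t ^ p / PP c R (Suc m) t)" for t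
  proof -
    have "PP c R m t \<noteq> 0" using PP_nz[OF cR] .
    then show ?thesis using nz[of t] by (simp add: PP_def field_simps)
  qed
  have i1: "(\<lambda>t. circlepath_R R t ^ p / PP c R m t) integrable_on {0..1}"
    using PP_nz[OF cR] by (intro integrable_continuous_real continuous_intros cont_PP cont_circ) auto
  have i2: "(\<lambda>t. c m * (circlepath_R R t ^ p / PP c R (Suc m) t)) integrable_on {0..1}"
    using PP_nz[OF 3(3)] by (intro integrable_continuous_real continuous_intros cont_PP cont_circ) auto
  have "integral {0..1} (\<lambda>t. circlepath_R R t ^ Suc p / PP c R (Suc m) t)
     = integral {0..1} (\<lambda>t. circlepath_R R t ^ p / PP c R m t) + integral {0..1} (\<lambda>t. c m * (circlepath_R R t ^ p / PP c R (Suc m) t))"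
    unfolding eq by (rule integral_add[OF i1 i2])
  also have "\<dots> = Hs c p m + c m * Hs c p (Suc m)"
    using 3(1)[OF cR] 3(2)[OF 3(3)] unfolding integral_mult_right by (simp only:)
  finally show ?case by simp
qed

lemma vd_circ:
  assumes "t \<in> {0..1}"
  shows "vector_derivative (circlepath_R R) (at t within {0..1}) = 2 * of_real pi * \<i> * circlepath_R R t"
proof -
  have "((\<lambda>w. of_real R * exp (2 * of_real pi * \<i> * w)) has_field_derivative
          of_real R * (exp (2 * of_real pi * \<i> * of_real t) * (2 * of_real pi * \<i>))) (at (of_real t))"
    by (auto intro!: derivative_eq_intros)
  then have "(circlepath_R R has_vector_derivative
          of_real R * (exp (2 * of_real pi * \<i> * of_real t) * (2 * of_real pi * \<i>))) (at t)"
    unfolding circlepath_R_def[abs_def] by (rule has_vector_derivative_real_field)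
  then show ?thesis using assms
    by (subst vector_derivative_at_within_ivl) (auto simp: circlepath_R_def mult_ac)
qed

lemma Phi_sums:
  fixes c :: "nat \<Rightarrow> complex"
  shows "(\<lambda>k. z^k / of_nat (fact k) * Hs c (Suc k) (Suc n)) sums fundamental_fun n c z"
proof -
  define R where "R = Max ((\<lambda>j. cmod (c j)) ` {0..n}) + 1"
  have cR: "\<forall>j<Suc n. cmod (c j) + 1 \<le> R"
    unfolding R_def by (auto intro!: Max_ge)
  have R1: "R \<ge> 1" using cR[rule_format, of 0] by (smt (verit) norm_ge_zero zero_less_Suc)
  have R0: "R > 0" using R1 by simp
  define g where "g = circlepath_R R"
  have ng: "norm (g t) = R" for t using R0 by (simp add: g_def norm_circ)
  have Pnz: "PP c R (Suc n) t \<noteq> 0" for t using PP_nz[OF cR] .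
  have PPe: "(\<Prod>j=0..n. g t - c j) = PP c R (Suc n) t" for t
    by (simp add: PP_def g_def atLeast0AtMost lessThan_Suc_atMost)
  have "fundamental_fun n c z = integral {0..1} (\<lambda>t. exp (z * g t) / PP c R (Suc n) t
                 * vector_derivative g (at t within {0..1})) / (2 * complex_of_real pi * \<i>)"
    unfolding fundamental_fun_def Let_def R_def[symmetric] g_def[symmetric] PPe ..
  also have "integral {0..1} (\<lambda>t. exp (z * g t) / PP c R (Suc n) t
                 * vector_derivative g (at t within {0..1}))
           = integral {0..1} (\<lambda>t. (2 * complex_of_real pi * \<i>) * (exp (z * g t) * g t / PP c R (Suc n) t))"
    by (rule integral_cong) (simp add: g_def vd_circ)
  also have "\<dots> = (2 * complex_of_real pi * \<i>) * integral {0..1} (\<lambda>t. exp (z * g t) * g t / PP c R (Suc n) t)"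
    by (rule integral_mult_right)
  finally have F: "fundamental_fun n c z = integral {0..1} (\<lambda>t. exp (z * g t) * g t / PP c R (Suc n) t)"
    by simp
  define f where "f k t = z^k / of_nat (fact k) * (g t ^ Suc k / PP c R (Suc n) t)" for k t
  have pw: "(\<lambda>k. f k t) sums (exp (z * g t) * g t / PP c R (Suc n) t)" for t
  proof -
    have X: "(\<lambda>k. (z * g t)^k /\<^sub>R fact k * (g t / PP c R (Suc n) t)) sums (exp (z * g t) * (g t / PP c R (Suc n) t))"
      by (intro sums_mult2 exp_converges)
    have E1: "(\<lambda>k. (z * g t)^k /\<^sub>R fact k * (g t / PP c R (Suc n) t)) = (\<lambda>k. f k t)"
      by (auto simp: f_def scaleR_conv_of_real power_mult_distrib divide_inverse mult_ac)
    show ?thesis using X unfolding E1 by simp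
  qed
  have cont: "continuous_on {0..1} (f k)" for k
    unfolding f_def using Pnz
    by (intro continuous_intros cont_PP) (auto simp: g_def intro: cont_circ)
  have bnd: "norm (f k t) \<le> inverse (fact k) * (norm z * R)^k * R" if "t \<in> {0..1}" for k t
  proof -
    have "norm (f k t) = norm z ^ k / fact k * (R ^ Suc k / norm (PP c R (Suc n) t))"
      by (simp add: f_def norm_mult norm_divide norm_power ng)
    also have "\<dots> \<le> norm z ^ k / fact k * R ^ Suc k"
    proof (rule mult_left_mono)
      have "1 \<le> norm (PP c R (Suc n) t)" using PP_ge[OF cR, of t] .
      then show "R ^ Suc k / norm (PP c R (Suc n) t) \<le> R ^ Suc k"
        using divide_left_mono[of 1 "norm (PP c R (Suc n) t)" "R ^ Suc k"] R0 Pnz[of t] by simp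
    qed simp
    also have "\<dots> = inverse (fact k) * (norm z * R)^k * R"
      by (simp add: power_mult_distrib divide_inverse mult_ac)
    finally show ?thesis .
  qed
  have sm: "summable (\<lambda>k. inverse (fact k) * (norm z * R)^k * R)"
    by (intro summable_mult2 summable_exp)
  have S: "(\<lambda>k. integral {0..1} (f k)) sums integral {0..1} (\<lambda>t. \<Sum>k. f k t)"
    by (rule integral_series[OF cont bnd sm])
  have E2: "(\<lambda>t. \<Sum>k. f k t) = (\<lambda>t. exp (z * g t) * g t / PP c R (Suc n) t)"
    using pw by (auto simp: sums_iff)
  have E3: "integral {0..1} (f k) = z^k / of_nat (fact k) * Hs c (Suc k) (Suc n)" for k
  proof -
    have "integral {0..1} (f k) = z^k / of_nat (fact k) * integral {0..1} (\<lambda>t. g t ^ Suc k / PP c R (Suc n) t)"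
      unfolding f_def by (rule integral_mult_right)
    then show ?thesis unfolding g_def K_lem[OF R1 cR] .
  qed
  show ?thesis using S unfolding E2 E3 F .
qed

lemma Hs_of_real: "Hs (\<lambda>j. complex_of_real (c j)) p m = of_real (Hs c p m)"
  by (induction c p m rule: Hs.induct) auto

lemma Hs_nonneg: "\<forall>j<m. 0 \<le> c j \<Longrightarrow> 0 \<le> Hs c p (m::nat)" for c :: "nat \<Rightarrow> real"
  by (induction c p m rule: Hs.induct) auto

lemma Hs_mono: "\<forall>j<m. 0 \<le> c j \<and> c j \<le> d j \<Longrightarrow> Hs c p m \<le> Hs d p (m::nat)" for c d :: "nat \<Rightarrow> real"
proof (induction c p m rule: Hs.induct)
  case (3 c p m)
  have a: "Hs c p m \<le> Hs d p m" using 3 by auto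
  have b: "Hs c p (Suc m) \<le> Hs d p (Suc m)" using 3 by auto
  have "c m * Hs c p (Suc m) \<le> d m * Hs d p (Suc m)"
    using 3(3) Hs_nonneg[of "Suc m" c p] by (intro mult_mono b) auto
  then show ?case using a by simp
qed auto

lemma Hs_diag: "\<forall>j<m. 0 \<le> c j \<Longrightarrow> 1 \<le> Hs c m (m::nat)" for c :: "nat \<Rightarrow> real"
proof (induction m)
  case (Suc m)
  have "0 \<le> c m * Hs c m (Suc m)" using Suc.prems Hs_nonneg[of "Suc m" c m] by simp
  then show ?case using Suc by simp
qed simp

theorem mainTheorem5:
  fixes n :: nat and lam mu :: "nat \<Rightarrow> real"
  assumes "\<forall>j\<le>n. 0 \<le> lam j \<and> lam j \<le> mu j"
  shows "(\<forall>x::real. fundamental_fun n (\<lambda>j. complex_of_real (lam j)) (complex_of_real x) \<in> \<real>)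
       \<and> (\<forall>x::real. x > 0 \<longrightarrow> Re (fundamental_fun n (\<lambda>j. complex_of_real (lam j)) (complex_of_real x)) > 0)
       \<and> (\<forall>z::complex. cmod (fundamental_fun n (\<lambda>j. complex_of_real (lam j)) z)
              \<le> Re (fundamental_fun n (\<lambda>j. complex_of_real (mu j)) (complex_of_real (cmod z))))"
proof -
  have lm: "\<forall>j<Suc n. 0 \<le> lam j \<and> lam j \<le> mu j" using assms by auto
  have l0: "\<forall>j<Suc n. 0 \<le> lam j" and m0: "\<forall>j<Suc n. 0 \<le> mu j" using lm by force+
  define a where "a c x k = x^k / fact k * Hs c (Suc k) (Suc n)" for c :: "nat \<Rightarrow> real" and x :: real and k
  have RS: "(\<lambda>k. a c x k) sums Re (fundamental_fun n (\<lambda>j. complex_of_real (c j)) (complex_of_real x))"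
     and IS: "Im (fundamental_fun n (\<lambda>j. complex_of_real (c j)) (complex_of_real x)) = 0" for c x
  proof -
    have T: "(\<lambda>k. (complex_of_real x)^k / of_nat (fact k) * Hs (\<lambda>j. complex_of_real (c j)) (Suc k) (Suc n))
         = (\<lambda>k. complex_of_real (a c x k))"
      by (auto simp: a_def Hs_of_real)
    have X: "(\<lambda>k. complex_of_real (a c x k)) sums fundamental_fun n (\<lambda>j. complex_of_real (c j)) (complex_of_real x)"
      using Phi_sums[of "complex_of_real x" "\<lambda>j. complex_of_real (c j)" n] unfolding T .
    show "(\<lambda>k. a c x k) sums Re (fundamental_fun n (\<lambda>j. complex_of_real (c j)) (complex_of_real x))"
      using sums_Re[OF X] by simp
    have "(\<lambda>k. 0) sums Im (fundamental_fun n (\<lambda>j. complex_of_real (c j)) (complex_of_real x))"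
      using sums_Im[OF X] by simp
    then show "Im (fundamental_fun n (\<lambda>j. complex_of_real (c j)) (complex_of_real x)) = 0"
      using sums_unique2 sums_zero by blast
  qed
  have P1: "\<forall>x::real. fundamental_fun n (\<lambda>j. complex_of_real (lam j)) (complex_of_real x) \<in> \<real>"
    using IS by (simp add: complex_is_Real_iff)
  have P2: "Re (fundamental_fun n (\<lambda>j. complex_of_real (lam j)) (complex_of_real x)) > 0" if x: "x > 0" for x
  proof -
    have "0 < suminf (a lam x)"
    proof (rule suminf_pos2)
      show "summable (a lam x)" using RS by (auto simp: sums_iff)
      show "0 \<le> a lam x k" for k
      proof -
        have "0 \<le> Hs lam (Suc k) (Suc n)" using Hs_nonneg[OF l0] .
        moreover have "0 \<le> x^k / fact k" using x by simp
        ultimately show ?thesis unfolding a_def by (rule mult_nonneg_nonneg[rotated])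
      qed
      show "0 < a lam x n"
      proof -
        have "0 < Hs lam (Suc n) (Suc n)" using Hs_diag[OF l0] by linarith
        moreover have "0 < x^n / fact n" using x by simp
        ultimately show ?thesis unfolding a_def by (rule mult_pos_pos[rotated])
      qed
    qed
    then show ?thesis using RS[of lam x] by (simp add: sums_iff)
  qed
  have P3: "cmod (fundamental_fun n (\<lambda>j. complex_of_real (lam j)) z)
          \<le> Re (fundamental_fun n (\<lambda>j. complex_of_real (mu j)) (complex_of_real (cmod z)))" for z
  proof -
    define t where "t k = z^k / of_nat (fact k) * Hs (\<lambda>j. complex_of_real (lam j)) (Suc k) (Suc n)" for k
    have X: "t sums fundamental_fun n (\<lambda>j. complex_of_real (lam j)) z"
      unfolding t_def by (rule Phi_sums)
    have nt: "norm (t k) = a lam (cmod z) k" for k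
      using Hs_nonneg[OF l0, of "Suc k"]
      by (simp add: t_def a_def Hs_of_real norm_mult norm_divide norm_power del: Hs.simps)
    have sn: "summable (\<lambda>k. norm (t k))" unfolding nt using RS by (auto simp: sums_iff)
    have "cmod (fundamental_fun n (\<lambda>j. complex_of_real (lam j)) z) = norm (suminf t)"
      using X by (simp add: sums_iff)
    also have "\<dots> \<le> (\<Sum>k. norm (t k))" by (rule summable_norm[OF sn])
    also have "\<dots> \<le> suminf (a mu (cmod z))"
    proof (rule suminf_le)
      show "norm (t k) \<le> a mu (cmod z) k" for k
        unfolding nt a_def using Hs_mono[OF lm, of "Suc k"] by (intro mult_left_mono) (auto simp del: Hs.simps)
      show "summable (\<lambda>k. norm (t k))" by (rule sn)
      show "summable (a mu (cmod z))" using RS by (auto simp: sums_iff)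
    qed
    also have "\<dots> = Re (fundamental_fun n (\<lambda>j. complex_of_real (mu j)) (complex_of_real (cmod z)))"
      using RS by (simp add: sums_iff)
    finally show ?thesis .
  qed
  show ?thesis using P1 P2 P3 by blast
qed

end
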